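(* Let $E$ be a separable real Hilbert space and let $1\leq p<\infty$. For every isometry (distance preserving bijection) $\Phi\colon\mathcal{W}_p(E)\to\mathcal{W}_p(E)$ there exists an isometry $\psi$ of $E$ such that $\Phi(\delta_x)=\delta_{\psi(x)}$ for all $x\in E$.
   Context: For $0<p<\infty$, $\mathcal{W}_p(E)$ is the set of Borel probability measures $\mu$ on $E$ with $\int_E\|x\|^p\,d\mu(x)<\infty$, equipped with the $p$-Wasserstein distance $d_{\mathcal{W}_p}(\mu,\nu)=\big(\inf_{\pi\in\Pi(\mu,\nu)}\int_{E\times E}\|x-y\|^p\,d\pi(x,y)\big)^{\min\{1/p,1\}}$, where $\Pi(\mu,\nu)$ is the set of Borel probability measures on $E\times E$ with marginals $\mu$ and $\nu$. $\delta_x$ denotes the Dirac measure at $x$. *)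

theory Defs
  imports "HOL-Probability.Probability"
begin

definition Wp_space :: "real \<Rightarrow> ('a::real_normed_vector) measure set" where
  "Wp_space p = {\<mu>. prob_space \<mu> \<and> sets \<mu> = sets borel \<and>
      (\<integral>\<^sup>+ x. ennreal (norm x powr p) \<partial>\<mu>) < \<infinity>}"

definition couplings :: "('a::real_normed_vector) measure \<Rightarrow> 'a measure \<Rightarrow> ('a \<times> 'a) measure set" where
  "couplings \<mu> \<nu> = {\<pi>. prob_space \<pi> \<and> sets \<pi> = sets borel \<and>
      distr \<pi> borel fst = \<mu> \<and> distr \<pi> borel snd = \<nu>}"

definition wasserstein_dist :: "real \<Rightarrow> ('a::real_normed_vector) measure \<Rightarrow> 'a measure \<Rightarrow> real" where
  "wasserstein_dist p \<mu> \<nu> =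
     (enn2real (INF \<pi>\<in>couplings \<mu> \<nu>. \<integral>\<^sup>+ z. ennreal (norm (fst z - snd z) powr p) \<partial>\<pi>))
       powr (min (1 / p) 1)"

end

theory Submission
  imports Defs
begin

lemma powr_sum_le:
  fixes a b p :: real
  assumes p: "1 \<le> p" and a: "0 \<le> a" and b: "0 \<le> b"
  shows "(a + b) powr p \<le> 2 powr (p - 1) * (a powr p + b powr p)"
proof (cases "a = 0 \<or> b = 0")
  case True
  have "1 \<le> 2 powr (p - 1)" using p by (simp add: ge_one_powr_ge_zero)
  then show ?thesis using True a b
    by (auto intro: mult_left_mono[of 1 _ "_ powr p", simplified] order_trans)
next
  case False
  hence a': "0 < a" and b': "0 < b" using a b by auto
  have "((1/2) * a + (1/2) * b) powr p \<le> (1/2) * a powr p + (1/2) * b powr p"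
    using convex_onD[OF powr_convex[OF p], of "1/2" a b] a' b' by simp
  hence "((a + b)/2) powr p \<le> (a powr p + b powr p) / 2"
    by (simp add: field_simps)
  moreover have "((a + b)/2) powr p = (a + b) powr p / 2 powr p"
    using a b by (simp add: powr_divide)
  moreover have "2 powr p = 2 * 2 powr (p - 1)"
    by (simp add: powr_diff)
  ultimately show ?thesis
    by (simp add: field_simps)
qed

lemma powr_sum_less:
  fixes a b c p :: real
  assumes p: "1 \<le> p" and a: "0 \<le> a" and b: "0 \<le> b" and c: "0 \<le> c" and lt: "c < a + b"
  shows "c powr p < 2 powr (p - 1) * (a powr p + b powr p)"
proof -
  have "c powr p < (a + b) powr p" using lt c p by (intro powr_less_mono2) auto
  with powr_sum_le[OF p a b] show ?thesis by linarith
qed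

lemma meas_borel_cong:
  assumes "sets M = sets borel"
  shows "f \<in> borel_measurable M \<longleftrightarrow> f \<in> borel_measurable borel"
  by (simp add: measurable_cong_sets[OF assms refl])

lemma WpD:
  assumes "\<mu> \<in> Wp_space p"
  shows "prob_space \<mu>" "sets \<mu> = sets borel"
    "(\<integral>\<^sup>+ x. ennreal (norm x powr p) \<partial>\<mu>) < \<infinity>"
  using assms by (auto simp: Wp_space_def)

lemma space_Wp:
  assumes "\<mu> \<in> Wp_space p"
  shows "space \<mu> = UNIV"
  using sets_eq_imp_space_eq[OF WpD(2)[OF assms]] by simp

lemma return_in_Wp: "return borel (x::'a::real_normed_vector) \<in> Wp_space p"
proof -
  have "(\<integral>\<^sup>+ y. ennreal (norm y powr p) \<partial>return borel x) = ennreal (norm x powr p)"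
    by (intro nn_integral_return) auto
  then show ?thesis
    by (auto simp: Wp_space_def prob_space_return)
qed

lemma moment_finite:
  fixes \<mu> :: "'a::real_normed_vector measure"
  assumes mu: "\<mu> \<in> Wp_space p" and p: "1 \<le> p"
  shows "(\<integral>\<^sup>+ y. ennreal (norm (a *\<^sub>R y + b) powr p) \<partial>\<mu>) < \<infinity>"
proof -
  interpret prob_space \<mu> using WpD[OF mu] by simp
  have sm: "sets \<mu> = sets borel" using WpD[OF mu] by simp
  let ?C = "2 powr (p - 1)"
  have pt: "norm (a *\<^sub>R y + b) powr p \<le> ?C * ((\<bar>a\<bar> powr p) * norm y powr p) + ?C * norm b powr p" for y
  proof -
    have "norm (a *\<^sub>R y + b) \<le> \<bar>a\<bar> * norm y + norm b"
      using norm_triangle_ineq[of "a *\<^sub>R y" b] by simp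
    hence "norm (a *\<^sub>R y + b) powr p \<le> (\<bar>a\<bar> * norm y + norm b) powr p"
      using p by (intro powr_mono2) auto
    also have "\<dots> \<le> ?C * ((\<bar>a\<bar> * norm y) powr p + norm b powr p)"
      using p by (intro powr_sum_le) auto
    finally show ?thesis by (simp add: powr_mult distrib_left)
  qed
  have "(\<integral>\<^sup>+ y. ennreal (norm (a *\<^sub>R y + b) powr p) \<partial>\<mu>)
      \<le> (\<integral>\<^sup>+ y. ennreal (?C * \<bar>a\<bar> powr p) * ennreal (norm y powr p) + ennreal (?C * norm b powr p) \<partial>\<mu>)"
    using pt by (intro nn_integral_mono) (auto simp: ennreal_mult[symmetric] ennreal_plus[symmetric] mult.assoc simp del: ennreal_plus)
  also have "\<dots> = ennreal (?C * \<bar>a\<bar> powr p) * (\<integral>\<^sup>+ y. ennreal (norm y powr p) \<partial>\<mu>) + ennreal (?C * norm b powr p)"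
    by (subst nn_integral_add) (auto simp: meas_borel_cong[OF sm] nn_integral_cmult emeasure_space_1)
  also have "\<dots> < \<infinity>"
    using WpD(3)[OF mu] by (simp add: ennreal_mult_less_top)
  finally show ?thesis .
qed

definition cost :: "real \<Rightarrow> ('a::real_normed_vector \<times> 'a) measure \<Rightarrow> ennreal" where
  "cost p \<pi> = (\<integral>\<^sup>+ z. ennreal (norm (fst z - snd z) powr p) \<partial>\<pi>)"

lemma couplingsD:
  assumes "\<pi> \<in> couplings \<mu> \<nu>"
  shows "prob_space \<pi>" "sets \<pi> = sets borel" "distr \<pi> borel fst = \<mu>" "distr \<pi> borel snd = \<nu>"
  using assms by (auto simp: couplings_def)

lemma fst_meas: "fst \<in> borel_measurable (borel :: ('a::topological_space \<times> 'b::topological_space) measure)"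
  by (intro borel_measurable_continuous_onI continuous_intros)

lemma snd_meas: "snd \<in> borel_measurable (borel :: ('a::topological_space \<times> 'b::topological_space) measure)"
  by (intro borel_measurable_continuous_onI continuous_intros)

lemma coupling_fst_integral:
  assumes "\<pi> \<in> couplings \<mu> \<nu>" and g: "g \<in> borel_measurable borel"
  shows "(\<integral>\<^sup>+ z. g (fst z) \<partial>\<pi>) = (\<integral>\<^sup>+ y. g y \<partial>\<mu>)"
proof -
  note c = couplingsD[OF assms(1)]
  have f: "fst \<in> measurable \<pi> borel" using fst_meas measurable_cong_sets[OF c(2) refl] by blast
  have "(\<integral>\<^sup>+ y. g y \<partial>\<mu>) = (\<integral>\<^sup>+ y. g y \<partial>distr \<pi> borel fst)" using c(3) by simp
  also have "\<dots> = (\<integral>\<^sup>+ z. g (fst z) \<partial>\<pi>)"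
    using g by (intro nn_integral_distr[OF f]) simp
  finally show ?thesis by simp
qed

lemma coupling_snd_integral:
  assumes "\<pi> \<in> couplings \<mu> \<nu>" and g: "g \<in> borel_measurable borel"
  shows "(\<integral>\<^sup>+ z. g (snd z) \<partial>\<pi>) = (\<integral>\<^sup>+ y. g y \<partial>\<nu>)"
proof -
  note c = couplingsD[OF assms(1)]
  have f: "snd \<in> measurable \<pi> borel" using snd_meas measurable_cong_sets[OF c(2) refl] by blast
  have "(\<integral>\<^sup>+ y. g y \<partial>\<nu>) = (\<integral>\<^sup>+ y. g y \<partial>distr \<pi> borel snd)" using c(4) by simp
  also have "\<dots> = (\<integral>\<^sup>+ z. g (snd z) \<partial>\<pi>)"
    using g by (intro nn_integral_distr[OF f]) simp
  finally show ?thesis by simp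
qed

lemma coupling_AE_dirac_fst:
  assumes "\<pi> \<in> couplings (return borel x) \<nu>"
  shows "AE z in \<pi>. fst z = x"
proof -
  note c = couplingsD[OF assms(1)]
  have f: "fst \<in> measurable \<pi> borel" using fst_meas measurable_cong_sets[OF c(2) refl] by blast
  have "AE y in distr \<pi> borel fst. y = x" unfolding c(3) by (subst AE_return) auto
  from AE_distrD[OF f this] show ?thesis .
qed

lemma coupling_AE_dirac_snd:
  assumes "\<pi> \<in> couplings \<nu> (return borel x)"
  shows "AE z in \<pi>. snd z = x"
proof -
  note c = couplingsD[OF assms(1)]
  have f: "snd \<in> measurable \<pi> borel" using snd_meas measurable_cong_sets[OF c(2) refl] by blast
  have "AE y in distr \<pi> borel snd. y = x" unfolding c(4) by (subst AE_return) auto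
  from AE_distrD[OF f this] show ?thesis .
qed

lemma cost_dirac_fst:
  fixes x :: "'a::{real_normed_vector, second_countable_topology}"
  assumes "\<pi> \<in> couplings (return borel x) \<nu>"
  shows "cost p \<pi> = (\<integral>\<^sup>+ z. ennreal (norm (z - x) powr p) \<partial>\<nu>)"
proof -
  have "cost p \<pi> = (\<integral>\<^sup>+ z. ennreal (norm (snd z - x) powr p) \<partial>\<pi>)"
    unfolding cost_def using coupling_AE_dirac_fst[OF assms]
    by (intro nn_integral_cong_AE) (auto elim!: eventually_mono simp: norm_minus_commute)
  also have "\<dots> = (\<integral>\<^sup>+ z. ennreal (norm (z - x) powr p) \<partial>\<nu>)"
    by (intro coupling_snd_integral[OF assms]) measurable
  finally show ?thesis .
qed

lemma cost_dirac_snd: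
  fixes x :: "'a::{real_normed_vector, second_countable_topology}"
  assumes "\<pi> \<in> couplings \<nu> (return borel x)"
  shows "cost p \<pi> = (\<integral>\<^sup>+ z. ennreal (norm (z - x) powr p) \<partial>\<nu>)"
proof -
  have "cost p \<pi> = (\<integral>\<^sup>+ z. ennreal (norm (fst z - x) powr p) \<partial>\<pi>)"
    unfolding cost_def using coupling_AE_dirac_snd[OF assms]
    by (intro nn_integral_cong_AE) (auto elim!: eventually_mono)
  also have "\<dots> = (\<integral>\<^sup>+ z. ennreal (norm (z - x) powr p) \<partial>\<nu>)"
    by (intro coupling_fst_integral[OF assms]) measurable
  finally show ?thesis .
qed

lemma prod_coupling:
  fixes \<mu> \<nu> :: "'a::{real_normed_vector, second_countable_topology} measure"
  assumes mu: "\<mu> \<in> Wp_space p" and nu: "\<nu> \<in> Wp_space p"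
  shows "\<mu> \<Otimes>\<^sub>M \<nu> \<in> couplings \<mu> \<nu>"
proof -
  interpret M: prob_space \<mu> using WpD[OF mu] by simp
  interpret N: prob_space \<nu> using WpD[OF nu] by simp
  interpret P: pair_prob_space \<mu> \<nu> by unfold_locales
  have sm: "sets \<mu> = sets borel" by (rule WpD(2)[OF mu])
  have sn: "sets \<nu> = sets borel" by (rule WpD(2)[OF nu])
  have sp: "sets (\<mu> \<Otimes>\<^sub>M \<nu>) = sets (borel :: ('a \<times> 'a) measure)"
    using sets_pair_measure_cong[OF sm sn] borel_prod by metis
  have d1: "distr (\<mu> \<Otimes>\<^sub>M \<nu>) borel fst = \<mu>"
    using distr_cong[OF refl sm[symmetric], of "\<mu> \<Otimes>\<^sub>M \<nu>" fst] N.distr_pair_fst by simp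
  have d2': "distr (\<mu> \<Otimes>\<^sub>M \<nu>) \<nu> snd = \<nu>"
  proof (intro measure_eqI)
    fix A assume A: "A \<in> sets (distr (\<mu> \<Otimes>\<^sub>M \<nu>) \<nu> snd)"
    hence A': "A \<in> sets \<nu>" by simp
    have "emeasure (distr (\<mu> \<Otimes>\<^sub>M \<nu>) \<nu> snd) A = emeasure (\<mu> \<Otimes>\<^sub>M \<nu>) (space \<mu> \<times> A)"
      using A' by (auto simp add: emeasure_distr space_pair_measure dest: sets.sets_into_space
          intro!: arg_cong2[where f=emeasure])
    also have "\<dots> = emeasure \<nu> A"
      using A' by (subst N.emeasure_pair_measure_Times) (auto simp: M.emeasure_space_1)
    finally show "emeasure (distr (\<mu> \<Otimes>\<^sub>M \<nu>) \<nu> snd) A = emeasure \<nu> A" .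
  qed simp
  have d2: "distr (\<mu> \<Otimes>\<^sub>M \<nu>) borel snd = \<nu>"
    using distr_cong[OF refl sn[symmetric], of "\<mu> \<Otimes>\<^sub>M \<nu>" snd] d2' by simp
  show ?thesis unfolding couplings_def using sp d1 d2 P.prob_space_axioms by blast
qed

lemma W_eq:
  assumes p: "1 \<le> p" and pi0: "\<pi>0 \<in> couplings \<mu> \<nu>" and le: "cost p \<pi>0 \<le> c"
    and ge: "\<And>\<pi>. \<pi> \<in> couplings \<mu> \<nu> \<Longrightarrow> c \<le> cost p \<pi>"
  shows "wasserstein_dist p \<mu> \<nu> = enn2real c powr (1 / p)"
proof -
  have "(INF \<pi>\<in>couplings \<mu> \<nu>. cost p \<pi>) = c"
  proof (rule antisym)
    show "(INF \<pi>\<in>couplings \<mu> \<nu>. cost p \<pi>) \<le> c" using INF_lower[OF pi0] le order_trans by blast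
    show "c \<le> (INF \<pi>\<in>couplings \<mu> \<nu>. cost p \<pi>)" using ge by (rule INF_greatest)
  qed
  moreover have "min (1 / p) 1 = 1 / p" using p by simp
  ultimately show ?thesis unfolding wasserstein_dist_def cost_def by simp
qed

lemma W_le:
  assumes p: "1 \<le> p" and pi0: "\<pi>0 \<in> couplings \<mu> \<nu>" and fin: "cost p \<pi>0 < \<infinity>"
  shows "wasserstein_dist p \<mu> \<nu> \<le> enn2real (cost p \<pi>0) powr (1 / p)"
proof -
  have "enn2real (INF \<pi>\<in>couplings \<mu> \<nu>. cost p \<pi>) \<le> enn2real (cost p \<pi>0)"
    using fin by (intro enn2real_mono INF_lower[OF pi0]) auto
  hence "enn2real (INF \<pi>\<in>couplings \<mu> \<nu>. cost p \<pi>) powr (1/p) \<le> enn2real (cost p \<pi>0) powr (1/p)"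
    using p by (intro powr_mono2) auto
  moreover have "min (1 / p) 1 = 1 / p" using p by simp
  ultimately show ?thesis unfolding wasserstein_dist_def cost_def by simp
qed

lemma W_dirac_fst:
  fixes \<nu> :: "'a::{real_normed_vector, second_countable_topology} measure"
  assumes p: "1 \<le> p" and nu: "\<nu> \<in> Wp_space p"
  shows "wasserstein_dist p (return borel x) \<nu> = enn2real (\<integral>\<^sup>+ z. ennreal (norm (z - x) powr p) \<partial>\<nu>) powr (1 / p)"
proof (rule W_eq[OF p prod_coupling[OF return_in_Wp nu]])
  show "cost p (return borel x \<Otimes>\<^sub>M \<nu>) \<le> (\<integral>\<^sup>+ z. ennreal (norm (z - x) powr p) \<partial>\<nu>)"
    using cost_dirac_fst[OF prod_coupling[OF return_in_Wp nu]] by simp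
  show "(\<integral>\<^sup>+ z. ennreal (norm (z - x) powr p) \<partial>\<nu>) \<le> cost p \<pi>" if "\<pi> \<in> couplings (return borel x) \<nu>" for \<pi>
    using cost_dirac_fst[OF that] by simp
qed

lemma W_dirac_snd:
  fixes \<nu> :: "'a::{real_normed_vector, second_countable_topology} measure"
  assumes p: "1 \<le> p" and nu: "\<nu> \<in> Wp_space p"
  shows "wasserstein_dist p \<nu> (return borel x) = enn2real (\<integral>\<^sup>+ z. ennreal (norm (z - x) powr p) \<partial>\<nu>) powr (1 / p)"
proof (rule W_eq[OF p prod_coupling[OF nu return_in_Wp]])
  show "cost p (\<nu> \<Otimes>\<^sub>M return borel x) \<le> (\<integral>\<^sup>+ z. ennreal (norm (z - x) powr p) \<partial>\<nu>)"
    using cost_dirac_snd[OF prod_coupling[OF nu return_in_Wp]] by simp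
  show "(\<integral>\<^sup>+ z. ennreal (norm (z - x) powr p) \<partial>\<nu>) \<le> cost p \<pi>" if "\<pi> \<in> couplings \<nu> (return borel x)" for \<pi>
    using cost_dirac_snd[OF that] by simp
qed

lemma borel_pair_measI:
  "f \<in> borel_measurable (borel \<Otimes>\<^sub>M borel) \<Longrightarrow> f \<in> borel_measurable (borel :: ('a::second_countable_topology \<times> 'b::second_countable_topology) measure)"
  by (simp add: borel_prod)

lemma cost_meas:
  "(\<lambda>z. ennreal (norm (fst z - snd z) powr p)) \<in> borel_measurable (borel :: ('a::{real_normed_vector, second_countable_topology} \<times> 'a) measure)"
  unfolding borel_prod[symmetric] by measurable

definition Par :: "real \<Rightarrow> 'a::real_normed_vector measure \<Rightarrow> 'a measure \<Rightarrow> bool" where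
  "Par p \<mu> \<nu> \<longleftrightarrow> (\<exists>\<nu>'\<in>Wp_space p. wasserstein_dist p \<mu> \<nu> = wasserstein_dist p \<mu> \<nu>' \<and>
      wasserstein_dist p \<nu> \<nu>' = 2 * wasserstein_dist p \<mu> \<nu>)"

lemma distr_in_Wp:
  fixes \<nu> :: "'a::{real_normed_vector, second_countable_topology} measure"
  assumes nu: "\<nu> \<in> Wp_space p" and p: "1 \<le> p"
  shows "distr \<nu> borel (\<lambda>y. a *\<^sub>R y + b) \<in> Wp_space p"
proof -
  interpret prob_space \<nu> using WpD[OF nu] by simp
  have sn: "sets \<nu> = sets borel" by (rule WpD(2)[OF nu])
  have m: "(\<lambda>y. a *\<^sub>R y + b) \<in> measurable \<nu> borel"
    unfolding meas_borel_cong[OF sn] by measurable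
  have "(\<integral>\<^sup>+ y. ennreal (norm y powr p) \<partial>distr \<nu> borel (\<lambda>y. a *\<^sub>R y + b))
      = (\<integral>\<^sup>+ y. ennreal (norm (a *\<^sub>R y + b) powr p) \<partial>\<nu>)"
    by (intro nn_integral_distr[OF m]) measurable
  also have "\<dots> < \<infinity>" by (rule moment_finite[OF nu p])
  finally show ?thesis
    unfolding Wp_space_def using prob_space_distr[OF m] by simp
qed

lemma Par_dirac:
  fixes \<nu> :: "'a::{real_normed_vector, second_countable_topology} measure"
  assumes nu: "\<nu> \<in> Wp_space p" and p: "1 \<le> p"
  shows "Par p \<nu> (return borel x)"
proof -
  interpret prob_space \<nu> using WpD[OF nu] by simp
  have sn: "sets \<nu> = sets borel" by (rule WpD(2)[OF nu])
  define \<nu>' where "\<nu>' = distr \<nu> borel (\<lambda>y. 2 *\<^sub>R y + (- x))"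
  have nu': "\<nu>' \<in> Wp_space p" unfolding \<nu>'_def by (rule distr_in_Wp[OF nu p])
  have m: "(\<lambda>y. 2 *\<^sub>R y + (- x)) \<in> measurable \<nu> borel"
    unfolding meas_borel_cong[OF sn] by measurable
  define C where "C = (\<integral>\<^sup>+ y. ennreal (norm (y - x) powr p) \<partial>\<nu>)"
  have Cfin: "C < \<infinity>" unfolding C_def using moment_finite[OF nu p, of 1 "- x"] by simp
  have W1: "wasserstein_dist p \<nu> (return borel x) = enn2real C powr (1/p)"
    unfolding C_def by (rule W_dirac_snd[OF p nu])
  have I2: "(\<integral>\<^sup>+ z. ennreal (norm (z - x) powr p) \<partial>\<nu>') = ennreal (2 powr p) * C"
  proof -
    have "(\<integral>\<^sup>+ z. ennreal (norm (z - x) powr p) \<partial>\<nu>')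
        = (\<integral>\<^sup>+ y. ennreal (norm ((2 *\<^sub>R y + (- x)) - x) powr p) \<partial>\<nu>)"
      unfolding \<nu>'_def by (intro nn_integral_distr[OF m]) measurable
    also have "\<dots> = (\<integral>\<^sup>+ y. ennreal (2 powr p) * ennreal (norm (y - x) powr p) \<partial>\<nu>)"
    proof (intro nn_integral_cong)
      fix y :: 'a
      have "(2 *\<^sub>R y + (- x)) - x = 2 *\<^sub>R (y - x)" by (simp add: algebra_simps scaleR_2)
      hence "norm ((2 *\<^sub>R y + (- x)) - x) = 2 * norm (y - x)" by simp
      thus "ennreal (norm ((2 *\<^sub>R y + (- x)) - x) powr p) = ennreal (2 powr p) * ennreal (norm (y - x) powr p)"
        by (simp add: powr_mult ennreal_mult)
    qed
    also have "\<dots> = ennreal (2 powr p) * C"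
      unfolding C_def by (rule nn_integral_cmult) (simp add: meas_borel_cong[OF sn])
    finally show ?thesis .
  qed
  have W2: "wasserstein_dist p (return borel x) \<nu>' = 2 * enn2real C powr (1/p)"
  proof -
    have "wasserstein_dist p (return borel x) \<nu>' = enn2real (ennreal (2 powr p) * C) powr (1/p)"
      using W_dirac_fst[OF p nu', of x] I2 by simp
    also have "\<dots> = (2 powr p * enn2real C) powr (1/p)"
      by (simp add: enn2real_mult)
    also have "\<dots> = 2 * enn2real C powr (1/p)"
      using p by (simp add: powr_mult powr_powr)
    finally show ?thesis .
  qed
  define \<pi>0 where "\<pi>0 = distr \<nu> borel (\<lambda>y. (y, 2 *\<^sub>R y + (- x)))"
  have m0: "(\<lambda>y. (y, 2 *\<^sub>R y + (- x))) \<in> measurable \<nu> borel"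
    unfolding meas_borel_cong[OF sn] by (intro borel_measurable_continuous_onI continuous_intros)
  have pi0: "\<pi>0 \<in> couplings \<nu> \<nu>'"
  proof -
    have "distr \<pi>0 borel fst = distr \<nu> borel (fst \<circ> (\<lambda>y. (y, 2 *\<^sub>R y + (- x))))"
      unfolding \<pi>0_def by (intro distr_distr fst_meas m0)
    also have "\<dots> = distr \<nu> borel (\<lambda>y. y)" by (simp add: o_def)
    also have "\<dots> = \<nu>" using sn by (intro distr_id2) simp
    finally have d1: "distr \<pi>0 borel fst = \<nu>" .
    have "distr \<pi>0 borel snd = distr \<nu> borel (snd \<circ> (\<lambda>y. (y, 2 *\<^sub>R y + (- x))))"
      unfolding \<pi>0_def by (intro distr_distr snd_meas m0)
    also have "\<dots> = \<nu>'" by (simp add: o_def \<nu>'_def)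
    finally have d2: "distr \<pi>0 borel snd = \<nu>'" .
    show ?thesis unfolding couplings_def using d1 d2 prob_space_distr[OF m0]
      by (simp add: \<pi>0_def)
  qed
  have c0: "cost p \<pi>0 = C"
  proof -
    have "cost p \<pi>0 = (\<integral>\<^sup>+ y. ennreal (norm (y - (2 *\<^sub>R y + (- x))) powr p) \<partial>\<nu>)"
      unfolding cost_def \<pi>0_def by (subst nn_integral_distr[OF m0]) (simp_all add: cost_meas)
    also have "\<dots> = C" unfolding C_def
    proof (intro nn_integral_cong)
      fix y :: 'a
      have "y - (2 *\<^sub>R y + (- x)) = - (y - x)" by (simp add: algebra_simps scaleR_2)
      thus "ennreal (norm (y - (2 *\<^sub>R y + (- x))) powr p) = ennreal (norm (y - x) powr p)"
        by (simp only: norm_minus_cancel)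
    qed
    finally show ?thesis .
  qed
  have lower: "C \<le> cost p \<pi>" if pi: "\<pi> \<in> couplings \<nu> \<nu>'" for \<pi>
  proof -
    have pt: "2 powr (1 - p) * norm (snd z - x) powr p \<le> norm (fst z - x) powr p + norm (fst z - snd z) powr p" for z :: "'a \<times> 'a"
    proof -
      have "norm (snd z - x) \<le> norm (fst z - x) + norm (fst z - snd z)"
        using norm_triangle_ineq[of "fst z - x" "snd z - fst z"] by (simp add: norm_minus_commute)
      hence "norm (snd z - x) powr p \<le> (norm (fst z - x) + norm (fst z - snd z)) powr p"
        using p by (intro powr_mono2) auto
      also have "\<dots> \<le> 2 powr (p - 1) * (norm (fst z - x) powr p + norm (fst z - snd z) powr p)"
        using p by (intro powr_sum_le) auto
      finally have "norm (snd z - x) powr p \<le> 2 powr (p - 1) * (norm (fst z - x) powr p + norm (fst z - snd z) powr p)" .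
      hence "2 powr (1 - p) * norm (snd z - x) powr p \<le> 2 powr (1 - p) * (2 powr (p - 1) * (norm (fst z - x) powr p + norm (fst z - snd z) powr p))"
        by (intro mult_left_mono) auto
      also have "\<dots> = norm (fst z - x) powr p + norm (fst z - snd z) powr p"
        by (simp add: powr_add[symmetric])
      finally show ?thesis .
    qed
    have sp: "sets \<pi> = sets borel" using couplingsD[OF pi] by simp
    have "C + C = ennreal (2 powr (1 - p)) * (ennreal (2 powr p) * C)"
    proof -
      have "ennreal (2 powr (1 - p)) * ennreal (2 powr p) = 2"
        by (simp add: ennreal_mult[symmetric] powr_add[symmetric])
      thus ?thesis by (metis mult.assoc mult_2)
    qed
    also have "\<dots> = ennreal (2 powr (1 - p)) * (\<integral>\<^sup>+ z. ennreal (norm (snd z - x) powr p) \<partial>\<pi>)"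
      using I2 coupling_snd_integral[OF pi, of "\<lambda>z. ennreal (norm (z - x) powr p)"] by simp
    also have "\<dots> = (\<integral>\<^sup>+ z. ennreal (2 powr (1 - p)) * ennreal (norm (snd z - x) powr p) \<partial>\<pi>)"
      by (rule nn_integral_cmult[symmetric]) (simp add: meas_borel_cong[OF sp], rule borel_pair_measI, measurable)
    also have "\<dots> \<le> (\<integral>\<^sup>+ z. ennreal (norm (fst z - x) powr p) + ennreal (norm (fst z - snd z) powr p) \<partial>\<pi>)"
      using pt by (intro nn_integral_mono) (simp add: ennreal_mult[symmetric] ennreal_plus[symmetric] del: ennreal_plus)
    also have "\<dots> = (\<integral>\<^sup>+ z. ennreal (norm (fst z - x) powr p) \<partial>\<pi>) + cost p \<pi>"
      unfolding cost_def by (rule nn_integral_add) (simp_all add: meas_borel_cong[OF sp] cost_meas, rule borel_pair_measI, measurable)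
    also have "(\<integral>\<^sup>+ z. ennreal (norm (fst z - x) powr p) \<partial>\<pi>) = C"
      unfolding C_def by (rule coupling_fst_integral[OF pi]) measurable
    finally show ?thesis using Cfin by (auto simp add: ennreal_add_left_cancel_le)
  qed
  have W3: "wasserstein_dist p \<nu> \<nu>' = enn2real C powr (1/p)"
    by (rule W_eq[OF p pi0]) (simp_all add: c0 lower)
  show ?thesis unfolding Par_def using nu' W1 W2 W3 by (intro bexI[of _ \<nu>']) auto
qed

lemma integrable_id_W:
  fixes \<mu> :: "'a::{banach, second_countable_topology} measure"
  assumes mu: "\<mu> \<in> Wp_space p" and p: "1 \<le> p"
  shows "integrable \<mu> (\<lambda>y. y)"
proof (rule integrableI_bounded)
  interpret prob_space \<mu> using WpD[OF mu] by simp
  have sm: "sets \<mu> = sets borel" by (rule WpD(2)[OF mu])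
  show "(\<lambda>y. y) \<in> borel_measurable \<mu>" by (simp add: meas_borel_cong[OF sm])
  have pt: "norm y \<le> 1 + norm y powr p" for y :: 'a
  proof (cases "norm y \<le> 1")
    case True thus ?thesis by (simp add: add_increasing2)
  next
    case False
    hence "norm y powr 1 \<le> norm y powr p" using p by (intro powr_mono) auto
    thus ?thesis using False by simp
  qed
  have "(\<integral>\<^sup>+ y. ennreal (norm y) \<partial>\<mu>) \<le> (\<integral>\<^sup>+ y. 1 + ennreal (norm y powr p) \<partial>\<mu>)"
  proof (intro nn_integral_mono)
    fix y :: 'a
    have "ennreal (norm y) \<le> ennreal (1 + norm y powr p)" using pt[of y] by (rule ennreal_leI)
    moreover have "ennreal (1 + norm y powr p) = 1 + ennreal (norm y powr p)" by (subst ennreal_plus) auto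
    ultimately show "ennreal (norm y) \<le> 1 + ennreal (norm y powr p)" by simp
  qed
  also have "\<dots> = 1 + (\<integral>\<^sup>+ y. ennreal (norm y powr p) \<partial>\<mu>)"
    by (subst nn_integral_add) (simp_all add: meas_borel_cong[OF sm] emeasure_space_1)
  also have "\<dots> < \<infinity>" using WpD(3)[OF mu] by simp
  finally show "(\<integral>\<^sup>+ y. ennreal (norm y) \<partial>\<mu>) < \<infinity>" .
qed

lemma dirac_of_AE:
  fixes \<mu> :: "'a::{real_normed_vector, second_countable_topology} measure"
  assumes mu: "\<mu> \<in> Wp_space p" and ae: "AE y in \<mu>. y = c"
  shows "\<mu> = return borel c"
proof (rule measure_eqI)
  interpret prob_space \<mu> using WpD[OF mu] by simp
  have sm: "sets \<mu> = sets borel" by (rule WpD(2)[OF mu])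
  show "sets \<mu> = sets (return borel c)" using sm by simp
  fix A assume "A \<in> sets \<mu>"
  hence A: "A \<in> sets borel" using sm by simp
  show "emeasure \<mu> A = emeasure (return borel c) A"
  proof (cases "c \<in> A")
    case True
    have "emeasure \<mu> A = emeasure \<mu> (space \<mu>)"
      using ae A sm by (intro emeasure_eq_AE) (auto elim!: eventually_mono simp: space_Wp[OF mu] True)
    thus ?thesis using True A by (simp add: emeasure_space_1)
  next
    case False
    have "emeasure \<mu> A = emeasure \<mu> {}"
      using ae A sm by (intro emeasure_eq_AE) (auto elim!: eventually_mono simp: False)
    thus ?thesis using False A by simp
  qed
qed

lemma inner_of_norm_eq:
  fixes u v :: "'a::real_inner"
  assumes "norm (u + v) = norm u + norm v"
  shows "inner u v = norm u * norm v"
proof -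
  have "(norm (u + v))\<^sup>2 = (norm u)\<^sup>2 + 2 * inner u v + (norm v)\<^sup>2"
    by (simp add: power2_norm_eq_inner inner_add_left inner_add_right inner_commute)
  also have "(norm (u + v))\<^sup>2 = (norm u)\<^sup>2 + 2 * (norm u * norm v) + (norm v)\<^sup>2"
    using assms by (simp add: power2_sum)
  finally show ?thesis by simp
qed

lemma AE_eq_of_nn_integral:
  fixes f g :: "'b \<Rightarrow> real"
  assumes fm: "f \<in> borel_measurable M" and gm: "g \<in> borel_measurable M"
    and f0: "\<And>x. 0 \<le> f x" and fg: "\<And>x. f x \<le> g x"
    and le: "(\<integral>\<^sup>+ x. ennreal (g x) \<partial>M) \<le> (\<integral>\<^sup>+ x. ennreal (f x) \<partial>M)"
    and fin: "(\<integral>\<^sup>+ x. ennreal (f x) \<partial>M) < \<infinity>"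
  shows "AE x in M. f x = g x"
proof -
  have "(\<integral>\<^sup>+ x. ennreal (g x) \<partial>M) = (\<integral>\<^sup>+ x. ennreal (f x) + ennreal (g x - f x) \<partial>M)"
    using f0 fg by (intro nn_integral_cong) (simp add: ennreal_plus[symmetric] del: ennreal_plus)
  also have "\<dots> = (\<integral>\<^sup>+ x. ennreal (f x) \<partial>M) + (\<integral>\<^sup>+ x. ennreal (g x - f x) \<partial>M)"
    using fm gm by (intro nn_integral_add) auto
  finally have "(\<integral>\<^sup>+ x. ennreal (f x) \<partial>M) + (\<integral>\<^sup>+ x. ennreal (g x - f x) \<partial>M) \<le> (\<integral>\<^sup>+ x. ennreal (f x) \<partial>M) + 0"
    using le by simp
  hence "(\<integral>\<^sup>+ x. ennreal (g x - f x) \<partial>M) \<le> 0"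
    using fin by (auto simp add: ennreal_add_left_cancel_le simp del: add_0_right)
  hence "(\<integral>\<^sup>+ x. ennreal (g x - f x) \<partial>M) = 0" by simp
  hence "AE x in M. ennreal (g x - f x) = 0"
    using fm gm by (subst (asm) nn_integral_0_iff_AE) auto
  thus ?thesis using fg by (auto elim!: eventually_mono simp: ennreal_eq_0_iff intro: antisym)
qed

lemma two_support_points:
  fixes \<mu> :: "'a::{real_normed_vector, second_countable_topology} measure"
  assumes mu: "\<mu> \<in> Wp_space p" and nd: "\<And>x. \<mu> \<noteq> return borel x"
  shows "\<exists>a b. a \<noteq> b \<and> (\<forall>e>0. 0 < emeasure \<mu> (ball a e)) \<and> (\<forall>e>0. 0 < emeasure \<mu> (ball b e))"
proof -
  interpret prob_space \<mu> using WpD[OF mu] by simp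
  have sm: "sets \<mu> = sets borel" by (rule WpD(2)[OF mu])
  obtain BB :: "'a set set" where cB: "countable BB" and tB: "topological_basis BB"
    using ex_countable_basis by blast
  define Z where "Z = {U\<in>BB. emeasure \<mu> U = 0}"
  have N0: "(\<Union>U\<in>Z. U) \<in> null_sets \<mu>"
  proof (rule null_sets_UN')
    show "countable Z" using cB unfolding Z_def by (rule countable_subset[rotated]) auto
    fix U assume "U \<in> Z"
    hence "U \<in> BB" "emeasure \<mu> U = 0" unfolding Z_def by auto
    moreover have "open U" using \<open>U \<in> BB\<close> tB by (auto simp: topological_basis_def)
    ultimately show "U \<in> null_sets \<mu>" using sm by (auto simp: null_sets_def)
  qed
  define S where "S = - (\<Union>U\<in>Z. U)"
  have pos: "0 < emeasure \<mu> (ball x e)" if xS: "x \<in> S" and e0: "e > 0" for x e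
  proof (rule ccontr)
    assume "\<not> 0 < emeasure \<mu> (ball x e)"
    hence z: "emeasure \<mu> (ball x e) = 0" by (simp add: not_gr_zero)
    obtain U where U: "U \<in> BB" "x \<in> U" "U \<subseteq> ball x e"
      using topological_basisE[OF tB open_ball[of x e]] e0 by (metis centre_in_ball)
    have "emeasure \<mu> U \<le> emeasure \<mu> (ball x e)"
      using U sm tB by (intro emeasure_mono) (auto simp: topological_basis_def)
    hence "U \<in> Z" using z U unfolding Z_def by auto
    thus False using U that unfolding S_def by auto
  qed
  have aeS: "AE y in \<mu>. y \<in> S" using AE_not_in[OF N0] unfolding S_def by simp
  obtain a where a: "a \<in> S"
  proof (cases "S = {}")
    case True
    hence "AE y in \<mu>. False" using aeS by simp
    thus ?thesis using AE_False prob_space_axioms by (simp add: prob_space.AE_False)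
  qed auto
  obtain b where b: "b \<in> S" "b \<noteq> a"
  proof (cases "S \<subseteq> {a}")
    case True
    hence "AE y in \<mu>. y = a" using aeS by (auto elim!: eventually_mono)
    thus ?thesis using dirac_of_AE[OF mu] nd by blast
  qed auto
  show ?thesis using a b pos by blast
qed

lemma AE_pos_ex:
  assumes ae: "AE x in M. P x" and pos: "0 < emeasure M A"
  shows "\<exists>x\<in>A. P x"
proof (rule ccontr)
  assume "\<not> (\<exists>x\<in>A. P x)"
  from ae obtain N where N: "{x \<in> space M. \<not> P x} \<subseteq> N" "emeasure M N = 0" "N \<in> sets M"
    by (rule AE_E)
  have A: "A \<in> sets M" using pos emeasure_notin_sets by fastforce
  have "A \<subseteq> N" using N(1) \<open>\<not> (\<exists>x\<in>A. P x)\<close> sets.sets_into_space[OF A] by auto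
  hence "emeasure M A \<le> emeasure M N" using N(3) by (rule emeasure_mono)
  thus False using N(2) pos by simp
qed

lemma collinear_of_inner:
  fixes v d :: "'a::real_inner"
  assumes d: "d \<noteq> 0" and eq: "inner v d = norm v * norm d"
  shows "v = (norm v / norm d) *\<^sub>R d"
proof -
  define l where "l = norm v / norm d"
  have "inner (v - l *\<^sub>R d) (v - l *\<^sub>R d) = inner v v - 2 * l * inner v d + l * l * inner d d"
    by (simp add: inner_diff_left inner_diff_right inner_commute algebra_simps)
  also have "\<dots> = (norm v)\<^sup>2 - 2 * l * (norm v * norm d) + l * l * (norm d)\<^sup>2"
    by (simp add: eq power2_norm_eq_inner)
  also have "\<dots> = 0" using d unfolding l_def by (simp add: field_simps power2_eq_square)
  finally have "v - l *\<^sub>R d = 0" by simp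
  thus ?thesis unfolding l_def by simp
qed

lemma geom_contra:
  fixes u v1 v2 d :: "'a::real_inner"
  assumes u: "u \<noteq> 0" and h1: "norm (v1 - u) < norm u / 4" and h2: "norm (v2 + u) < norm u / 4"
    and d: "d \<noteq> 0" and i1: "inner v1 d = norm v1 * norm d" and i2: "inner v2 d = norm v2 * norm d"
  shows False
proof -
  have "v1 = (norm v1 / norm d) *\<^sub>R d" by (rule collinear_of_inner[OF d i1])
  moreover have "v2 = (norm v2 / norm d) *\<^sub>R d" by (rule collinear_of_inner[OF d i2])
  ultimately have "inner v1 v2 = (norm v1 / norm d) * (norm v2 / norm d) * inner d d"
    by (metis inner_scaleR_left inner_scaleR_right mult.assoc)
  hence nn: "0 \<le> inner v1 v2" by simp
  define e1 where "e1 = v1 - u"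
  define e2 where "e2 = v2 + u"
  have "inner v1 v2 = inner (u + e1) (e2 - u)" unfolding e1_def e2_def by simp
  also have "\<dots> = - (norm u)\<^sup>2 + inner u e2 - inner e1 u + inner e1 e2"
    by (simp add: inner_add_left inner_add_right inner_diff_left inner_diff_right power2_norm_eq_inner inner_commute algebra_simps)
  also have "\<dots> \<le> - (norm u)\<^sup>2 + norm u * norm e2 + norm e1 * norm u + norm e1 * norm e2"
    using Cauchy_Schwarz_ineq2[of u e2] Cauchy_Schwarz_ineq2[of e1 u] Cauchy_Schwarz_ineq2[of e1 e2]
    by (simp add: abs_le_iff)
  also have "\<dots> < 0"
  proof -
    have a1: "norm e1 < norm u / 4" and a2: "norm e2 < norm u / 4" using h1 h2 unfolding e1_def e2_def by auto
    have nu: "0 < norm u" using u by simp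
    define U where "U = norm u * norm u"
    have U0: "0 < U" unfolding U_def using nu by simp
    have sq: "(norm u)\<^sup>2 = U" unfolding U_def by (simp add: power2_eq_square)
    have "norm u * norm e2 \<le> norm u * (norm u / 4)" using a2 nu by (intro mult_left_mono) auto
    hence f1: "norm u * norm e2 \<le> U / 4" unfolding U_def by simp
    have "norm e1 * norm u \<le> (norm u / 4) * norm u" using a1 nu by (intro mult_right_mono) auto
    hence f2: "norm e1 * norm u \<le> U / 4" unfolding U_def by simp
    have "norm e1 * norm e2 \<le> (norm u / 4) * (norm u / 4)" using a1 a2 by (intro mult_mono) auto
    hence f3: "norm e1 * norm e2 \<le> U / 16" unfolding U_def by simp
    show ?thesis unfolding sq using f1 f2 f3 U0 by linarith
  qed
  finally show False using nn by simp
qed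

lemma not_Par_some:
  fixes \<mu> :: "'a::{real_inner, second_countable_topology} measure"
  assumes mu: "\<mu> \<in> Wp_space p" and p: "1 \<le> p" and nd: "\<And>x. \<mu> \<noteq> return borel x"
  shows "\<exists>c. \<not> Par p (return borel c) \<mu>"
proof -
  obtain s1 s2 where ab: "s1 \<noteq> s2" and pa: "\<And>e. e > 0 \<Longrightarrow> 0 < emeasure \<mu> (ball s1 e)"
    and pb: "\<And>e. e > 0 \<Longrightarrow> 0 < emeasure \<mu> (ball s2 e)"
    using two_support_points[OF mu nd] by blast
  define c where "c = (1/2) *\<^sub>R (s1 + s2)"
  define u where "u = s1 - c"
  have "s1 = (1/2) *\<^sub>R s1 + (1/2) *\<^sub>R s1" by (simp add: scaleR_add_left[symmetric])
  hence uu: "u = (1/2) *\<^sub>R (s1 - s2)" unfolding u_def c_def by (simp add: algebra_simps)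
  hence u0: "u \<noteq> 0" using ab by simp
  have "s2 = (1/2) *\<^sub>R s2 + (1/2) *\<^sub>R s2" by (simp add: scaleR_add_left[symmetric])
  hence bu: "s2 - c = - u" unfolding uu c_def by (simp add: algebra_simps)
  define \<epsilon> where "\<epsilon> = norm u / 4"
  have e0: "\<epsilon> > 0" using u0 unfolding \<epsilon>_def by simp
  show ?thesis
  proof (intro exI[of _ c] notI)
  assume "Par p (return borel c) \<mu>"
  then obtain \<nu>' where nu': "\<nu>' \<in> Wp_space p"
    and e1: "wasserstein_dist p (return borel c) \<mu> = wasserstein_dist p (return borel c) \<nu>'"
    and e2: "wasserstein_dist p \<mu> \<nu>' = 2 * wasserstein_dist p (return borel c) \<mu>"
    unfolding Par_def c_def by blast
  interpret M: prob_space \<mu> using WpD[OF mu] by simp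
  interpret N: prob_space \<nu>' using WpD[OF nu'] by simp
  interpret P: pair_prob_space \<mu> \<nu>' by unfold_locales
  have sm: "sets \<mu> = sets borel" by (rule WpD(2)[OF mu])
  have sn: "sets \<nu>' = sets borel" by (rule WpD(2)[OF nu'])
  define A where "A = (\<integral>\<^sup>+ y. ennreal (norm (y - c) powr p) \<partial>\<mu>)"
  define B where "B = (\<integral>\<^sup>+ y. ennreal (norm (y - c) powr p) \<partial>\<nu>')"
  have Afin: "A < \<infinity>" unfolding A_def using moment_finite[OF mu p, of 1 "- c"] by simp
  have Bfin: "B < \<infinity>" unfolding B_def using moment_finite[OF nu' p, of 1 "- c"] by simp
  define a where "a = enn2real A"
  define b where "b = enn2real B"
  have a0: "0 \<le> a" and b0: "0 \<le> b" unfolding a_def b_def by auto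
  have WA: "wasserstein_dist p (return borel c) \<mu> = a powr (1/p)"
    unfolding a_def A_def by (rule W_dirac_fst[OF p mu])
  have WB: "wasserstein_dist p (return borel c) \<nu>' = b powr (1/p)"
    unfolding b_def B_def by (rule W_dirac_fst[OF p nu'])
  have rt: "(x powr (1/p)) powr p = x" if "0 \<le> x" for x :: real
    using that p by (simp add: powr_powr)
  have "a powr (1/p) = b powr (1/p)" using e1 WA WB by simp
  hence "(a powr (1/p)) powr p = (b powr (1/p)) powr p" by simp
  hence ab: "a = b" using rt[OF a0] rt[OF b0] by simp
  have A_eq: "A = ennreal a" using Afin unfolding a_def by simp
  have B_eq: "B = ennreal b" using Bfin unfolding b_def by simp
  have AB: "A = B" using A_eq B_eq ab by simp
  define \<pi> where "\<pi> = \<mu> \<Otimes>\<^sub>M \<nu>'"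
  have pi: "\<pi> \<in> couplings \<mu> \<nu>'" unfolding \<pi>_def by (rule prod_coupling[OF mu nu'])
  have sp: "sets \<pi> = sets borel" using couplingsD[OF pi] by simp
  define L where "L z = norm (fst z - snd z) powr p" for z :: "'a \<times> 'a"
  define H where "H z = 2 powr (p - 1) * (norm (fst z - c) powr p + norm (snd z - c) powr p)" for z :: "'a \<times> 'a"
  have Lm: "L \<in> borel_measurable \<pi>" unfolding L_def meas_borel_cong[OF sp]
    by (rule borel_pair_measI) measurable
  have Hm: "H \<in> borel_measurable \<pi>" unfolding H_def meas_borel_cong[OF sp]
    by (rule borel_pair_measI) measurable
  have tri: "norm (fst z - snd z) \<le> norm (fst z - c) + norm (snd z - c)" for z :: "'a \<times> 'a"
    using norm_triangle_ineq[of "fst z - c" "c - snd z"] by (simp add: norm_minus_commute)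
  have LH: "L z \<le> H z" for z
  proof -
    have "L z \<le> (norm (fst z - c) + norm (snd z - c)) powr p"
      unfolding L_def using p tri[of z] by (intro powr_mono2) auto
    also have "\<dots> \<le> H z" unfolding H_def using p by (intro powr_sum_le) auto
    finally show ?thesis .
  qed
  have m1: "(\<lambda>z. ennreal (norm (fst z - c) powr p)) \<in> borel_measurable \<pi>"
    unfolding meas_borel_cong[OF sp] by (rule borel_pair_measI) measurable
  have m2: "(\<lambda>z. ennreal (norm (snd z - c) powr p)) \<in> borel_measurable \<pi>"
    unfolding meas_borel_cong[OF sp] by (rule borel_pair_measI) measurable
  have IH: "(\<integral>\<^sup>+ z. ennreal (H z) \<partial>\<pi>) = ennreal (2 powr (p - 1)) * (A + B)"
  proof -
    have "(\<integral>\<^sup>+ z. ennreal (H z) \<partial>\<pi>) = (\<integral>\<^sup>+ z. ennreal (2 powr (p - 1)) * (ennreal (norm (fst z - c) powr p) + ennreal (norm (snd z - c) powr p)) \<partial>\<pi>)"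
      unfolding H_def by (intro nn_integral_cong) (simp add: ennreal_mult ennreal_plus[symmetric] del: ennreal_plus)
    also have "\<dots> = ennreal (2 powr (p - 1)) * (\<integral>\<^sup>+ z. ennreal (norm (fst z - c) powr p) + ennreal (norm (snd z - c) powr p) \<partial>\<pi>)"
      by (rule nn_integral_cmult) (simp add: meas_borel_cong[OF sp], rule borel_pair_measI, measurable)
    also have "(\<integral>\<^sup>+ z. ennreal (norm (fst z - c) powr p) + ennreal (norm (snd z - c) powr p) \<partial>\<pi>)
        = (\<integral>\<^sup>+ z. ennreal (norm (fst z - c) powr p) \<partial>\<pi>) + (\<integral>\<^sup>+ z. ennreal (norm (snd z - c) powr p) \<partial>\<pi>)"
      by (rule nn_integral_add[OF m1 m2])
    also have "(\<integral>\<^sup>+ z. ennreal (norm (fst z - c) powr p) \<partial>\<pi>) = A"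
      unfolding A_def by (rule coupling_fst_integral[OF pi]) measurable
    also have "(\<integral>\<^sup>+ z. ennreal (norm (snd z - c) powr p) \<partial>\<pi>) = B"
      unfolding B_def by (rule coupling_snd_integral[OF pi]) measurable
    finally show ?thesis .
  qed
  have IH': "(\<integral>\<^sup>+ z. ennreal (H z) \<partial>\<pi>) = ennreal (2 powr p * a)"
  proof -
    have "ennreal (2 powr (p - 1)) * (A + B) = ennreal (2 powr (p - 1)) * ennreal (2 * a)"
      using A_eq AB a0 by (simp add: ennreal_plus[symmetric] del: ennreal_plus)
    also have "\<dots> = ennreal (2 powr (p - 1) * (2 * a))"
      using a0 by (subst ennreal_mult) auto
    also have "2 powr (p - 1) * (2 * a) = 2 powr p * a"
      by (simp add: powr_diff)
    finally show ?thesis using IH by simp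
  qed
  have costLe: "cost p \<pi> \<le> (\<integral>\<^sup>+ z. ennreal (H z) \<partial>\<pi>)"
    unfolding cost_def using LH by (intro nn_integral_mono) (simp add: L_def ennreal_leI)
  have costFin: "cost p \<pi> < \<infinity>" using costLe IH' by (simp add: order_le_less_trans)
  have "2 * a powr (1/p) \<le> enn2real (cost p \<pi>) powr (1/p)"
    using W_le[OF p pi costFin] e2 WA by simp
  hence "(2 * a powr (1/p)) powr p \<le> (enn2real (cost p \<pi>) powr (1/p)) powr p"
    using p a0 by (intro powr_mono2) auto
  hence "2 powr p * a \<le> enn2real (cost p \<pi>)"
    using rt[OF a0] rt[of "enn2real (cost p \<pi>)"] by (simp add: powr_mult)
  hence "ennreal (2 powr p * a) \<le> ennreal (enn2real (cost p \<pi>))" by (rule ennreal_leI)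
  also have "ennreal (enn2real (cost p \<pi>)) = cost p \<pi>" using costFin by simp
  finally have le2: "ennreal (2 powr p * a) \<le> cost p \<pi>" .
  have cL: "cost p \<pi> = (\<integral>\<^sup>+ z. ennreal (L z) \<partial>\<pi>)" unfolding cost_def L_def by (rule refl)
  have geH: "(\<integral>\<^sup>+ z. ennreal (H z) \<partial>\<pi>) \<le> (\<integral>\<^sup>+ z. ennreal (L z) \<partial>\<pi>)"
    unfolding IH' cL[symmetric] by (rule le2)
  have LFin: "(\<integral>\<^sup>+ z. ennreal (L z) \<partial>\<pi>) < \<infinity>" using costFin unfolding cL .
  have aeLH: "AE z in \<pi>. L z = H z"
    by (rule AE_eq_of_nn_integral[OF Lm Hm _ LH geH LFin]) (simp add: L_def)
  have aeN: "AE z in \<pi>. norm (fst z - snd z) = norm (fst z - c) + norm (snd z - c)"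
    using aeLH
  proof (rule eventually_mono)
    fix z assume eq: "L z = H z"
    show "norm (fst z - snd z) = norm (fst z - c) + norm (snd z - c)"
    proof (rule ccontr)
      assume "norm (fst z - snd z) \<noteq> norm (fst z - c) + norm (snd z - c)"
      hence "norm (fst z - snd z) < norm (fst z - c) + norm (snd z - c)" using tri[of z] by simp
      hence "L z < H z" unfolding L_def H_def using p by (intro powr_sum_less) auto
      thus False using eq by simp
    qed
  qed
  have aeI: "AE z in \<pi>. inner (fst z - c) (c - snd z) = norm (fst z - c) * norm (snd z - c)"
    using aeN
  proof (rule eventually_mono)
    fix z :: "'a \<times> 'a"
    assume "norm (fst z - snd z) = norm (fst z - c) + norm (snd z - c)"
    hence "norm ((fst z - c) + (c - snd z)) = norm (fst z - c) + norm (c - snd z)"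
      by (simp add: norm_minus_commute)
    from inner_of_norm_eq[OF this]
    show "inner (fst z - c) (c - snd z) = norm (fst z - c) * norm (snd z - c)"
      by (simp add: norm_minus_commute)
  qed
  have aeI2: "AE y in \<mu>. AE z in \<nu>'. inner (y - c) (c - z) = norm (y - c) * norm (z - c)"
    using P.AE_pair[of "\<lambda>z. inner (fst z - c) (c - snd z) = norm (fst z - c) * norm (snd z - c)"] aeI
    unfolding \<pi>_def by simp
  obtain y1 where y1: "y1 \<in> ball s1 \<epsilon>" and q1: "AE z in \<nu>'. inner (y1 - c) (c - z) = norm (y1 - c) * norm (z - c)"
    using AE_pos_ex[OF aeI2 pa[OF e0]] by auto
  obtain y2 where y2: "y2 \<in> ball s2 \<epsilon>" and q2: "AE z in \<nu>'. inner (y2 - c) (c - z) = norm (y2 - c) * norm (z - c)"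
    using AE_pos_ex[OF aeI2 pb[OF e0]] by auto
  have notc: "\<not> (AE z in \<nu>'. z = c)"
  proof
    assume "AE z in \<nu>'. z = c"
    hence "B = (\<integral>\<^sup>+ z. 0 \<partial>\<nu>')" unfolding B_def using p
      by (intro nn_integral_cong_AE) (auto elim!: eventually_mono)
    hence "A = 0" using AB by simp
    hence "AE y in \<mu>. ennreal (norm (y - c) powr p) = 0"
      unfolding A_def by (subst (asm) nn_integral_0_iff_AE) (simp_all add: meas_borel_cong[OF sm])
    hence "AE y in \<mu>. y = c" by (auto elim!: eventually_mono)
    thus False using dirac_of_AE[OF mu] nd by blast
  qed
  obtain z0 where z0: "z0 \<noteq> c" and qz1: "inner (y1 - c) (c - z0) = norm (y1 - c) * norm (z0 - c)"
     and qz2: "inner (y2 - c) (c - z0) = norm (y2 - c) * norm (z0 - c)"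
  proof -
    have "AE z in \<nu>'. inner (y1 - c) (c - z) = norm (y1 - c) * norm (z - c) \<and> inner (y2 - c) (c - z) = norm (y2 - c) * norm (z - c)"
      using q1 q2 by eventually_elim auto
    show ?thesis
    proof (rule ccontr)
      assume nt: "\<not> thesis"
      have "AE z in \<nu>'. z = c" using \<open>AE z in \<nu>'. _ \<and> _\<close>
        by (rule eventually_mono) (use that nt in blast)
      with notc show False by simp
    qed
  qed
  show False
  proof (rule geom_contra[of u "y1 - c" "y2 - c" "c - z0"])
    show "u \<noteq> 0" by fact
    show "norm (y1 - c - u) < norm u / 4" using y1 unfolding u_def \<epsilon>_def by (simp add: dist_norm norm_minus_commute)
    have "y2 - c + u = y2 - s2" using bu
      by (metis add_diff_cancel_left' diff_add_cancel diff_diff_eq2 diff_minus_eq_add)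
    hence "norm (y2 - c + u) = dist s2 y2" by (simp only: dist_norm norm_minus_commute)
    thus "norm (y2 - c + u) < norm u / 4" using y2 unfolding \<epsilon>_def by simp
    show "c - z0 \<noteq> 0" using z0 by simp
    show "inner (y1 - c) (c - z0) = norm (y1 - c) * norm (c - z0)" using qz1 by (metis norm_minus_commute)
    show "inner (y2 - c) (c - z0) = norm (y2 - c) * norm (c - z0)" using qz2 by (metis norm_minus_commute)
  qed
  qed
qed

definition Pd :: "real \<Rightarrow> 'a::real_normed_vector measure \<Rightarrow> bool" where
  "Pd p \<mu> \<longleftrightarrow> (\<forall>\<nu>\<in>Wp_space p. Par p \<mu> \<nu> \<longrightarrow> Par p \<nu> \<mu>)"

lemma Pd_char:
  fixes \<mu> :: "'a::{real_inner, second_countable_topology} measure"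
  assumes mu: "\<mu> \<in> Wp_space p" and p: "1 \<le> p"
  shows "Pd p \<mu> \<longleftrightarrow> (\<exists>x. \<mu> = return borel x)"
proof
  assume "\<exists>x. \<mu> = return borel x"
  then obtain x where x: "\<mu> = return borel x" by blast
  show "Pd p \<mu>" unfolding Pd_def x using Par_dirac[OF _ p] by blast
next
  assume pd: "Pd p \<mu>"
  show "\<exists>x. \<mu> = return borel x"
  proof (rule ccontr)
    assume "\<not> (\<exists>x. \<mu> = return borel x)"
    hence nd: "\<And>x. \<mu> \<noteq> return borel x" by blast
    obtain c where c: "\<not> Par p (return borel c) \<mu>" using not_Par_some[OF mu p nd] by blast
    have "Par p \<mu> (return borel c)" by (rule Par_dirac[OF mu p])
    thus False using pd c return_in_Wp unfolding Pd_def by blast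
  qed
qed

lemma Par_iso:
  assumes bij: "bij_betw \<Phi> (Wp_space p) (Wp_space p)"
    and iso: "\<forall>\<mu>\<in>Wp_space p. \<forall>\<nu>\<in>Wp_space p. wasserstein_dist p (\<Phi> \<mu>) (\<Phi> \<nu>) = wasserstein_dist p \<mu> \<nu>"
    and mu: "\<mu> \<in> Wp_space p" and nu: "\<nu> \<in> Wp_space p"
  shows "Par p (\<Phi> \<mu>) (\<Phi> \<nu>) \<longleftrightarrow> Par p \<mu> \<nu>"
proof
  assume "Par p (\<Phi> \<mu>) (\<Phi> \<nu>)"
  then obtain \<rho> where r: "\<rho> \<in> Wp_space p" "wasserstein_dist p (\<Phi> \<mu>) (\<Phi> \<nu>) = wasserstein_dist p (\<Phi> \<mu>) \<rho>"
    "wasserstein_dist p (\<Phi> \<nu>) \<rho> = 2 * wasserstein_dist p (\<Phi> \<mu>) (\<Phi> \<nu>)"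
    unfolding Par_def by blast
  obtain \<rho>' where r': "\<rho>' \<in> Wp_space p" "\<rho> = \<Phi> \<rho>'"
    using r(1) bij unfolding bij_betw_def by blast
  have i1: "wasserstein_dist p (\<Phi> \<mu>) (\<Phi> \<nu>) = wasserstein_dist p \<mu> \<nu>" using iso mu nu by blast
  have i2: "wasserstein_dist p (\<Phi> \<mu>) (\<Phi> \<rho>') = wasserstein_dist p \<mu> \<rho>'" using iso mu r'(1) by blast
  have i3: "wasserstein_dist p (\<Phi> \<nu>) (\<Phi> \<rho>') = wasserstein_dist p \<nu> \<rho>'" using iso nu r'(1) by blast
  show "Par p \<mu> \<nu>" unfolding Par_def
    using r(2,3) r'(1) unfolding r'(2) i1 i2 i3 by blast
next
  assume "Par p \<mu> \<nu>"
  then obtain \<rho> where r: "\<rho> \<in> Wp_space p" "wasserstein_dist p \<mu> \<nu> = wasserstein_dist p \<mu> \<rho>"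
    "wasserstein_dist p \<nu> \<rho> = 2 * wasserstein_dist p \<mu> \<nu>"
    unfolding Par_def by blast
  have "\<Phi> \<rho> \<in> Wp_space p" using r(1) bij unfolding bij_betw_def by blast
  moreover have i1: "wasserstein_dist p (\<Phi> \<mu>) (\<Phi> \<nu>) = wasserstein_dist p \<mu> \<nu>" using iso mu nu by blast
  moreover have i2: "wasserstein_dist p (\<Phi> \<mu>) (\<Phi> \<rho>) = wasserstein_dist p \<mu> \<rho>" using iso mu r(1) by blast
  moreover have i3: "wasserstein_dist p (\<Phi> \<nu>) (\<Phi> \<rho>) = wasserstein_dist p \<nu> \<rho>" using iso nu r(1) by blast
  ultimately show "Par p (\<Phi> \<mu>) (\<Phi> \<nu>)" unfolding Par_def
    using r(2,3) by (intro bexI[of _ "\<Phi> \<rho>"]) simp_all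
qed

lemma Pd_iso:
  assumes bij: "bij_betw \<Phi> (Wp_space p) (Wp_space p)"
    and iso: "\<forall>\<mu>\<in>Wp_space p. \<forall>\<nu>\<in>Wp_space p. wasserstein_dist p (\<Phi> \<mu>) (\<Phi> \<nu>) = wasserstein_dist p \<mu> \<nu>"
    and mu: "\<mu> \<in> Wp_space p"
  shows "Pd p (\<Phi> \<mu>) \<longleftrightarrow> Pd p \<mu>"
proof -
  have img: "\<Phi> ` Wp_space p = Wp_space p" using bij unfolding bij_betw_def by blast
  have "Pd p (\<Phi> \<mu>) \<longleftrightarrow> (\<forall>\<nu>\<in>\<Phi> ` Wp_space p. Par p (\<Phi> \<mu>) \<nu> \<longrightarrow> Par p \<nu> (\<Phi> \<mu>))"
    unfolding Pd_def img ..
  also have "\<dots> \<longleftrightarrow> (\<forall>\<nu>\<in>Wp_space p. Par p (\<Phi> \<mu>) (\<Phi> \<nu>) \<longrightarrow> Par p (\<Phi> \<nu>) (\<Phi> \<mu>))" by blast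
  also have "\<dots> \<longleftrightarrow> (\<forall>\<nu>\<in>Wp_space p. Par p \<mu> \<nu> \<longrightarrow> Par p \<nu> \<mu>)"
    using Par_iso[OF bij iso] mu by auto
  finally show ?thesis unfolding Pd_def .
qed

lemma W_diracs:
  fixes a b :: "'a::{real_normed_vector, second_countable_topology}"
  assumes p: "1 \<le> p"
  shows "wasserstein_dist p (return borel a) (return borel b) = dist a b"
proof -
  have "(\<integral>\<^sup>+ z. ennreal (norm (z - a) powr p) \<partial>return borel b) = ennreal (norm (b - a) powr p)"
    by (intro nn_integral_return) auto
  hence "wasserstein_dist p (return borel a) (return borel b) = (norm (b - a) powr p) powr (1/p)"
    using W_dirac_fst[OF p return_in_Wp, of a b] by simp
  also have "\<dots> = dist a b" using p by (simp add: powr_powr dist_norm norm_minus_commute)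
  finally show ?thesis .
qed

lemma return_inj:
  assumes "return borel (a::'a::{t1_space}) = return borel b"
  shows "a = b"
proof -
  have "emeasure (return borel a) {a} = emeasure (return borel b) {a}" using assms by simp
  thus ?thesis by (auto simp: indicator_def split: if_splits)
qed

theorem corollary3p6:
  fixes p :: real
    and \<Phi> :: "('a::{real_inner, complete_space, second_countable_topology}) measure \<Rightarrow> 'a measure"
  assumes "1 \<le> p"
    and "bij_betw \<Phi> (Wp_space p) (Wp_space p)"
    and "\<forall>\<mu>\<in>Wp_space p. \<forall>\<nu>\<in>Wp_space p.
           wasserstein_dist p (\<Phi> \<mu>) (\<Phi> \<nu>) = wasserstein_dist p \<mu> \<nu>"
  shows "\<exists>\<psi> :: 'a \<Rightarrow> 'a. bij \<psi> \<and> (\<forall>x y. dist (\<psi> x) (\<psi> y) = dist x y) \<and>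
           (\<forall>x. \<Phi> (return borel x) = return borel (\<psi> x))"
proof -
  note p = assms(1) and bij = assms(2) and iso = assms(3)
  have inW: "\<Phi> \<mu> \<in> Wp_space p" if "\<mu> \<in> Wp_space p" for \<mu>
    using bij that unfolding bij_betw_def by blast
  have ex: "\<exists>y. \<Phi> (return borel x) = return borel y" for x
  proof -
    have "Pd p (return borel x)" using Pd_char[OF return_in_Wp p] by blast
    hence "Pd p (\<Phi> (return borel x))" using Pd_iso[OF bij iso return_in_Wp] by blast
    thus ?thesis using Pd_char[OF inW[OF return_in_Wp] p] by blast
  qed
  define \<psi> where "\<psi> x = (SOME y. \<Phi> (return borel x) = return borel y)" for x
  have psi: "\<Phi> (return borel x) = return borel (\<psi> x)" for x
    unfolding \<psi>_def using someI_ex[OF ex[of x]] .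
  have dist: "dist (\<psi> x) (\<psi> y) = dist x y" for x y
  proof -
    have "dist (\<psi> x) (\<psi> y) = wasserstein_dist p (return borel (\<psi> x)) (return borel (\<psi> y))"
      by (rule W_diracs[OF p, symmetric])
    also have "\<dots> = wasserstein_dist p (\<Phi> (return borel x)) (\<Phi> (return borel y))" by (simp add: psi)
    also have "\<dots> = wasserstein_dist p (return borel x) (return borel y)" using iso return_in_Wp by blast
    also have "\<dots> = dist x y" by (rule W_diracs[OF p])
    finally show ?thesis .
  qed
  have inj: "inj \<psi>"
  proof (rule injI)
    fix x y assume "\<psi> x = \<psi> y"
    hence "dist x y = 0" using dist[of x y] by (metis dist_self)
    thus "x = y" by simp
  qed
  have surj: "surj \<psi>" unfolding surj_def
  proof
    fix y
    have img: "\<Phi> ` Wp_space p = Wp_space p" using bij by (simp add: bij_betw_def)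
    have "return borel y \<in> \<Phi> ` Wp_space p" unfolding img by (rule return_in_Wp)
    then obtain \<mu> where e': "return borel y = \<Phi> \<mu>" and mu: "\<mu> \<in> Wp_space p" by (rule imageE)
    have e: "\<Phi> \<mu> = return borel y" using e' by (rule sym)
    have "Pd p (\<Phi> \<mu>)" unfolding e using Pd_char[OF return_in_Wp p] by blast
    hence "Pd p \<mu>" using Pd_iso[OF bij iso mu] by blast
    then obtain x where x: "\<mu> = return borel x" using Pd_char[OF mu p] by blast
    have "return borel (\<psi> x) = return borel y" using psi[of x] e x by simp
    hence "\<psi> x = y" by (rule return_inj)
    thus "\<exists>x. y = \<psi> x" by metis
  qed
  show ?thesis
  proof (intro exI[of _ \<psi>] conjI allI)
    show "bij \<psi>" unfolding bij_def using inj surj by (rule conjI)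
    show "dist (\<psi> x) (\<psi> y) = dist x y" for x y by (rule dist)
    show "\<Phi> (return borel x) = return borel (\<psi> x)" for x by (rule psi)
  qed
qed

end
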